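(* Let $\beta\in\mathbb{C}$ with $|\beta|=1$, $m\in\mathrm{Hol}(\mathbb{D})$, $m\not\equiv0$, $T:\mathrm{Hol}(\mathbb{D})\to\mathrm{Hol}(\mathbb{D})$ given by $(Tf)(z)=m(z)f(\beta z)$, and let $T_0$ be the restriction of $T$ to $\mathrm{Hol}_0(\mathbb{D})=\{f\in\mathrm{Hol}(\mathbb{D}):f(0)=0\}$ (which is $T$-invariant). Then $\sigma(T_0)=\beta\sigma(T)$ and $\rho(T_0)=\beta\rho(T)$.
   Context: $\mathbb{D}$ is the open unit disc, $\mathrm{Hol}(\mathbb{D})$ the space of holomorphic functions on $\mathbb{D}$. For a linear operator $S$ on a space $Y$, $\rho(S)$ is the set of $\lambda\in\mathbb{C}$ with $\lambda\mathrm{Id}-S$ bijective on $Y$ and $\sigma(S)=\mathbb{C}\setminus\rho(S)$. *)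

theory Defs
  imports "HOL-Analysis.Analysis"
begin

text \<open>Hol(D): holomorphic functions on the open unit disc, represented canonically
  by functions that vanish outside the disc (so that function equality is equality on D).\<close>
definition Hol :: "(complex \<Rightarrow> complex) set" where
  "Hol = {f. f holomorphic_on ball 0 1 \<and> (\<forall>z. z \<notin> ball 0 1 \<longrightarrow> f z = 0)}"

definition Hol0 :: "(complex \<Rightarrow> complex) set" where
  "Hol0 = {f \<in> Hol. f 0 = 0}"

definition wcomp_op :: "(complex \<Rightarrow> complex) \<Rightarrow> complex \<Rightarrow> (complex \<Rightarrow> complex) \<Rightarrow> (complex \<Rightarrow> complex)" where
  "wcomp_op m \<beta> f = (\<lambda>z. if z \<in> ball 0 1 then m z * f (\<beta> * z) else 0)"

definition resolvent_set :: "(('a \<Rightarrow> complex) \<Rightarrow> ('a \<Rightarrow> complex)) \<Rightarrow> ('a \<Rightarrow> complex) set \<Rightarrow> complex set" where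
  "resolvent_set S Y = {c. bij_betw (\<lambda>f. (\<lambda>z. c * f z - S f z)) Y Y}"

definition spectrum_op :: "(('a \<Rightarrow> complex) \<Rightarrow> ('a \<Rightarrow> complex)) \<Rightarrow> ('a \<Rightarrow> complex) set \<Rightarrow> complex set" where
  "spectrum_op S Y = - resolvent_set S Y"

end

theory Submission
  imports Defs "HOL-Complex_Analysis.Complex_Analysis"
begin

lemma Hol_T:
  assumes b: "norm \<beta> = 1" and m: "m holomorphic_on ball 0 1" and f: "f \<in> Hol"
  shows "wcomp_op m \<beta> f \<in> Hol"
proof -
  have fh: "f holomorphic_on ball 0 1" using f by (simp add: Hol_def)
  have img: "(\<lambda>z. \<beta> * z) ` ball 0 1 \<subseteq> ball 0 1"
    using b by (auto simp: norm_mult)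
  have "(f \<circ> (\<lambda>z. \<beta> * z)) holomorphic_on ball 0 1"
    by (rule holomorphic_on_compose_gen[OF _ fh img]) (intro holomorphic_intros)
  hence "(\<lambda>z. m z * f (\<beta> * z)) holomorphic_on ball 0 1"
    using m by (auto simp: o_def intro!: holomorphic_intros)
  hence "wcomp_op m \<beta> f holomorphic_on ball 0 1"
    by (rule holomorphic_cong[THEN iffD1, rotated 2]) (auto simp: wcomp_op_def)
  thus ?thesis by (simp add: Hol_def wcomp_op_def)
qed

lemma Hol_lin:
  assumes "f \<in> Hol" "g \<in> Hol"
  shows "(\<lambda>z. c * f z - g z) \<in> Hol"
  using assms by (auto simp: Hol_def intro!: holomorphic_intros)

lemma Hol_scale:
  assumes "f \<in> Hol"
  shows "(\<lambda>z. c * f z) \<in> Hol"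
  using assms by (auto simp: Hol_def intro!: holomorphic_intros)

lemma J_bij: "bij_betw (\<lambda>g z. z * g z) Hol Hol0"
proof (rule bij_betw_byWitness[where f'="\<lambda>f z. if z \<in> ball 0 1 then (if z = 0 then deriv f 0 else f z / z) else 0"])
  show "\<forall>a\<in>Hol. (\<lambda>z. if z \<in> ball 0 1 then (if z = 0 then deriv (\<lambda>z. z * a z) 0 else z * a z / z) else 0) = a"
  proof
    fix g assume g: "g \<in> Hol"
    have "g holomorphic_on ball 0 1" using g by (simp add: Hol_def)
    hence "g field_differentiable at 0"
      using holomorphic_on_imp_differentiable_at[of g "ball 0 1" 0] by simp
    then obtain g' where "(g has_field_derivative g') (at 0)"
      by (auto simp: field_differentiable_def)
    hence "((\<lambda>z. z * g z) has_field_derivative (1 * g 0 + 0 * g')) (at 0)"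
      by (intro derivative_eq_intros) auto
    hence d: "deriv (\<lambda>z. z * g z) 0 = g 0" using DERIV_imp_deriv by fastforce
    show "(\<lambda>z. if z \<in> ball 0 1 then (if z = 0 then deriv (\<lambda>z. z * g z) 0 else z * g z / z) else 0) = g"
      using g d by (auto simp: Hol_def)
  qed
  show "\<forall>a'\<in>Hol0. (\<lambda>z. z * (if z \<in> ball 0 1 then (if z = 0 then deriv a' 0 else a' z / z) else 0)) = a'"
    by (auto simp: Hol0_def Hol_def)
  show "(\<lambda>g z. z * g z) ` Hol \<subseteq> Hol0"
    by (auto simp: Hol0_def Hol_def intro!: holomorphic_intros)
  show "(\<lambda>f z. if z \<in> ball 0 1 then (if z = 0 then deriv f 0 else f z / z) else 0) ` Hol0 \<subseteq> Hol"
  proof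
    fix h assume "h \<in> (\<lambda>f z. if z \<in> ball 0 1 then (if z = 0 then deriv f 0 else f z / z) else 0) ` Hol0"
    then obtain f where f: "f \<in> Hol0" and h: "h = (\<lambda>z. if z \<in> ball 0 1 then (if z = 0 then deriv f 0 else f z / z) else 0)"
      by auto
    have fh: "f holomorphic_on ball 0 1" and f0: "f 0 = 0" using f by (auto simp: Hol0_def Hol_def)
    have "(\<lambda>z. if z = 0 then deriv f 0 else (f z - f 0) / (z - 0)) holomorphic_on ball 0 1"
      by (rule pole_lemma_open[OF fh]) simp
    hence "h holomorphic_on ball 0 1"
      by (rule holomorphic_cong[THEN iffD1, rotated 2]) (auto simp: h f0)
    thus "h \<in> Hol" by (auto simp: Hol_def h)
  qed
qed

lemma S_bij:
  assumes "\<beta> \<noteq> 0"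
  shows "bij_betw (\<lambda>g z. \<beta> * g z) Hol Hol"
proof (rule bij_betw_byWitness[where f'="\<lambda>g z. inverse \<beta> * g z"])
  show "(\<lambda>g z. inverse \<beta> * g z) ` Hol \<subseteq> Hol" using Hol_scale by blast
  show "(\<lambda>g z. \<beta> * g z) ` Hol \<subseteq> Hol" using Hol_scale by blast
qed (use assms in auto)

lemma key:
  assumes b: "norm \<beta> = 1" and m: "m holomorphic_on ball 0 1"
  shows "bij_betw (\<lambda>f z. (\<beta> * c) * f z - wcomp_op m \<beta> f z) Hol0 Hol0 \<longleftrightarrow>
         bij_betw (\<lambda>f z. c * f z - wcomp_op m \<beta> f z) Hol Hol"
proof -
  let ?B = "\<lambda>f z. (\<beta> * c) * f z - wcomp_op m \<beta> f z"
  let ?A = "\<lambda>f z. c * f z - wcomp_op m \<beta> f z"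
  let ?J = "\<lambda>g z. z * g z"
  let ?S = "\<lambda>g z. \<beta> * g z"
  have bn: "\<beta> \<noteq> 0" using b by auto
  have Aimg: "?A ` Hol \<subseteq> Hol" using Hol_lin Hol_T[OF b m] by auto
  have SAimg: "(?S \<circ> ?A) ` Hol \<subseteq> Hol" using Aimg Hol_scale by auto
  have eq: "?B \<circ> ?J = ?J \<circ> (?S \<circ> ?A)"
    by (simp add: fun_eq_iff wcomp_op_def algebra_simps)
  have "bij_betw ?B Hol0 Hol0 \<longleftrightarrow> bij_betw (?B \<circ> ?J) Hol Hol0"
    by (rule bij_betw_comp_iff[OF J_bij])
  also have "\<dots> \<longleftrightarrow> bij_betw (?S \<circ> ?A) Hol Hol"
    unfolding eq by (rule bij_betw_comp_iff2[OF J_bij SAimg, symmetric])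
  also have "\<dots> \<longleftrightarrow> bij_betw ?A Hol Hol"
    by (rule bij_betw_comp_iff2[OF S_bij[OF bn] Aimg, symmetric])
  finally show ?thesis .
qed

lemma img_iff:
  assumes "(\<beta>::complex) \<noteq> 0"
  shows "x \<in> (\<lambda>c. \<beta> * c) ` X \<longleftrightarrow> x / \<beta> \<in> X"
proof
  assume "x \<in> (\<lambda>c. \<beta> * c) ` X"
  then obtain c where "c \<in> X" "x = \<beta> * c" by auto
  thus "x / \<beta> \<in> X" using assms by simp
next
  assume "x / \<beta> \<in> X"
  moreover have "x = \<beta> * (x / \<beta>)" using assms by simp
  ultimately show "x \<in> (\<lambda>c. \<beta> * c) ` X" by (rule rev_image_eqI)
qed

theorem lemma2p3:
  fixes \<beta> :: complex and m :: "complex \<Rightarrow> complex"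
  assumes "norm \<beta> = 1"
    and "m holomorphic_on ball 0 1"
    and "\<exists>z\<in>ball 0 1. m z \<noteq> 0"
  shows "(\<forall>f\<in>Hol0. wcomp_op m \<beta> f \<in> Hol0)
    \<and> spectrum_op (wcomp_op m \<beta>) Hol0 = (\<lambda>c. \<beta> * c) ` spectrum_op (wcomp_op m \<beta>) Hol
    \<and> resolvent_set (wcomp_op m \<beta>) Hol0 = (\<lambda>c. \<beta> * c) ` resolvent_set (wcomp_op m \<beta>) Hol"
proof -
  have bn: "\<beta> \<noteq> 0" using assms(1) by auto
  have A: "\<forall>f\<in>Hol0. wcomp_op m \<beta> f \<in> Hol0"
    using Hol_T[OF assms(1,2)] by (auto simp: Hol0_def wcomp_op_def)
  have R: "x \<in> resolvent_set (wcomp_op m \<beta>) Hol0 \<longleftrightarrow> x \<in> (\<lambda>c. \<beta> * c) ` resolvent_set (wcomp_op m \<beta>) Hol" for x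
  proof -
    have "x = \<beta> * (x / \<beta>)" using bn by simp
    then show ?thesis
      unfolding img_iff[OF bn] resolvent_set_def mem_Collect_eq
      using key[OF assms(1,2), of "x / \<beta>"] by metis
  qed
  have S: "x \<in> spectrum_op (wcomp_op m \<beta>) Hol0 \<longleftrightarrow> x \<in> (\<lambda>c. \<beta> * c) ` spectrum_op (wcomp_op m \<beta>) Hol" for x
    using R[of x] unfolding spectrum_op_def img_iff[OF bn] by auto
  show ?thesis using A R S by blast
qed

end
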